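(* Let $T>0$, $p>1$, $E_1\ge0$, $\epsilon\in(0,1)$. Let $\varphi,\varphi_\epsilon\in L^2(\mathbb{R})$ with $\|\varphi-\varphi_\epsilon\|\le\epsilon$, and let $u$ be the exact solution of the backward heat problem with final value $\varphi$, satisfying $\|u(\cdot,0)\|\le E_1$. Choose $\beta=\epsilon^p$ and let $v_\epsilon=R_\beta\varphi_\epsilon$. Then for every $t\in[0,T]$, $$\|u(\cdot,t)-v_\epsilon(\cdot,t)\|\le \epsilon^{\frac{t}{T}}(E_1+1).$$
   Context: $\|\cdot\|$ denotes the norm of $L^2(\mathbb{R})$. The Fourier transform is $\hat\psi(\xi)=\frac{1}{\sqrt{2\pi}}\int_{-\infty}^{\infty}\psi(x)e^{-i\xi x}\,dx$ (extended to $L^2(\mathbb{R})$ as a unitary map). Exact solution: for $\varphi\in L^2(\mathbb{R})$, the exact solution $u$ of $u_t-u_{xx}=0$ on $\mathbb{R}\times(0,T)$, $u(\cdot,T)=\varphi$, is given by $\hat u(\xi,t)=e^{(T-t)\xi^2}\hat\varphi(\xi)$ for $t\in[0,T]$; it is assumed that $u(\cdot,0)\in L^2(\mathbb{R})$. Regularized solution: for $\beta>0$ and $\psi\in L^2(\mathbb{R})$, $R_\beta\psi$ is the function whose Fourier transform in $x$ is $\widehat{(R_\beta\psi)}(\xi,t)=\frac{e^{-t\xi^2}}{\beta e^{(p-1)T\xi^2}+e^{-T\xi^2}}\hat\psi(\xi)=\frac{e^{(T-t)\xi^2}}{1+\beta e^{pT\xi^2}}\hat\psi(\xi)$, $t\in[0,T]$.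 *)

theory Defs
  imports "HOL-Analysis.Analysis"
begin

text \<open>Square-integrable complex-valued functions on the real line (elements of L^2(R),
  represented by functions; the Fourier transform below is only required to behave
  correctly up to null sets).\<close>
definition L2 :: "(real \<Rightarrow> complex) set" where
  "L2 = {f. f \<in> borel_measurable lborel \<and> integrable lborel (\<lambda>x. (cmod (f x))\<^sup>2)}"

definition L2_norm :: "(real \<Rightarrow> complex) \<Rightarrow> real" where
  "L2_norm f = sqrt (\<integral>x. (cmod (f x))\<^sup>2 \<partial>lborel)"

definition fourier_integral :: "(real \<Rightarrow> complex) \<Rightarrow> real \<Rightarrow> complex" where
  "fourier_integral f \<xi> =
     complex_of_real (1 / sqrt (2 * pi)) * (\<integral>x. f x * cis (- (\<xi> * x)) \<partial>lborel)"

text \<open>These properties determine F on L2 up to null sets.\<close>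
definition is_L2_fourier :: "((real \<Rightarrow> complex) \<Rightarrow> (real \<Rightarrow> complex)) \<Rightarrow> bool" where
  "is_L2_fourier F \<longleftrightarrow>
     (\<forall>f\<in>L2. F f \<in> L2 \<and> L2_norm (F f) = L2_norm f) \<and>
     (\<forall>f\<in>L2. \<forall>g\<in>L2. \<forall>c::complex.
        AE \<xi> in lborel. F (\<lambda>x. c * f x + g x) \<xi> = c * F f \<xi> + F g \<xi>) \<and>
     (\<forall>g\<in>L2. \<exists>f\<in>L2. AE \<xi> in lborel. F f \<xi> = g \<xi>) \<and>
     (\<forall>f\<in>L2. integrable lborel f \<longrightarrow> (AE \<xi> in lborel. F f \<xi> = fourier_integral f \<xi>))"

end

theory Submission
  imports Defs
begin

lemma real_cs_aux:
  fixes x A B :: real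
  assumes H: "\<And>l. l > 0 \<Longrightarrow> x \<le> (l * A + B / l) / 2" and A: "A \<ge> 0" and B: "B \<ge> 0"
  shows "x \<le> sqrt A * sqrt B"
proof (cases "A > 0 \<and> B > 0")
  case True
  define l where "l = sqrt B / sqrt A"
  have l: "l > 0" using True by (simp add: l_def)
  have "x \<le> (l * A + B / l) / 2" using H[OF l] .
  also have "l * A = sqrt A * sqrt B" using True
    by (simp add: l_def field_simps; (metis A real_sqrt_pow2 power2_eq_square)?)
  also have "B / l = sqrt A * sqrt B" using True
    by (simp add: l_def field_simps; (metis B real_sqrt_pow2 power2_eq_square)?)
  finally show ?thesis by simp
next
  case False
  show ?thesis
  proof (rule ccontr)
    assume nx: "\<not> x \<le> sqrt A * sqrt B"
    from False A B have "A = 0 \<or> B = 0" by auto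
    then have x0: "x > 0" using nx by auto
    show False
    proof (cases "A = 0")
      case True
      define l where "l = B / x + 1"
      have "B / x \<ge> 0" using x0 B by simp
      then have l: "l > 0" by (simp add: l_def)
      have "x \<le> B / l / 2" using H[OF l] True by simp
      moreover have "B / l < x"
        using x0 B l by (simp add: l_def field_simps)
      moreover have "B / l / 2 \<le> B / l" using B l by (simp add: field_simps)
      ultimately show False by linarith
    next
      case False
      then have B0: "B = 0" using \<open>A = 0 \<or> B = 0\<close> by auto
      define l where "l = x / (A + 1)"
      have l: "l > 0" using x0 A by (simp add: l_def)
      have "x \<le> l * A / 2" using H[OF l] B0 by simp
      moreover have "l * A < x"
        using x0 A by (simp add: l_def field_simps)
      moreover have "l * A / 2 \<le> l * A" using A l by simp
      ultimately show False by linarith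
    qed
  qed
qed

lemma L2_diff:
  assumes "f \<in> L2" "g \<in> L2"
  shows "(\<lambda>x. f x - g x) \<in> L2"
proof -
  have [measurable]: "f \<in> borel_measurable lborel" "g \<in> borel_measurable lborel"
    using assms by (auto simp: L2_def)
  have i: "integrable lborel (\<lambda>x. 2 * (cmod (f x))\<^sup>2 + 2 * (cmod (g x))\<^sup>2)"
    using assms by (auto simp: L2_def)
  have "integrable lborel (\<lambda>x. (cmod (f x - g x))\<^sup>2)"
  proof (rule Bochner_Integration.integrable_bound[OF i])
    show "AE x in lborel. norm ((cmod (f x - g x))\<^sup>2) \<le> norm (2 * (cmod (f x))\<^sup>2 + 2 * (cmod (g x))\<^sup>2)"
    proof (rule AE_I2)
      fix x
      have "cmod (f x - g x) \<le> cmod (f x) + cmod (g x)" by (rule norm_triangle_ineq4)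
      then have "(cmod (f x - g x))\<^sup>2 \<le> (cmod (f x) + cmod (g x))\<^sup>2"
        by (simp add: power_mono)
      also have "\<dots> \<le> 2 * (cmod (f x))\<^sup>2 + 2 * (cmod (g x))\<^sup>2"
      proof -
        have "0 \<le> (cmod (f x) - cmod (g x))\<^sup>2" by simp
        then show ?thesis by (simp add: power2_eq_square algebra_simps)
      qed
      finally show "norm ((cmod (f x - g x))\<^sup>2) \<le> norm (2 * (cmod (f x))\<^sup>2 + 2 * (cmod (g x))\<^sup>2)"
        by simp
    qed
  qed measurable
  then show ?thesis by (auto simp: L2_def)
qed

lemma L2_bound:
  assumes h: "h \<in> L2" and g1: "g1 \<in> L2" and g2: "g2 \<in> L2" and a: "a \<ge> 0" and b: "b \<ge> 0"
    and ae: "AE x in lborel. cmod (h x) \<le> a * cmod (g1 x) + b * cmod (g2 x)"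
  shows "L2_norm h \<le> a * L2_norm g1 + b * L2_norm g2"
proof -
  have [measurable]: "h \<in> borel_measurable lborel" "g1 \<in> borel_measurable lborel"
    "g2 \<in> borel_measurable lborel"
    using assms by (auto simp: L2_def)
  have i1: "integrable lborel (\<lambda>x. (cmod (g1 x))\<^sup>2)" and i2: "integrable lborel (\<lambda>x. (cmod (g2 x))\<^sup>2)"
    and ih: "integrable lborel (\<lambda>x. (cmod (h x))\<^sup>2)"
    using assms by (auto simp: L2_def)
  define N1 where "N1 = (\<integral>x. (cmod (g1 x))\<^sup>2 \<partial>lborel)"
  define N2 where "N2 = (\<integral>x. (cmod (g2 x))\<^sup>2 \<partial>lborel)"
  define C where "C = (\<integral>x. cmod (g1 x) * cmod (g2 x) \<partial>lborel)"
  have N1: "N1 \<ge> 0" and N2: "N2 \<ge> 0" unfolding N1_def N2_def by auto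
  have i12: "integrable lborel (\<lambda>x. cmod (g1 x) * cmod (g2 x))"
  proof (rule Bochner_Integration.integrable_bound[OF Bochner_Integration.integrable_add[OF i1 i2]])
    show "AE x in lborel. norm (cmod (g1 x) * cmod (g2 x)) \<le> norm ((cmod (g1 x))\<^sup>2 + (cmod (g2 x))\<^sup>2)"
    proof (rule AE_I2)
      fix x
      have "0 \<le> (cmod (g1 x) - cmod (g2 x))\<^sup>2" by simp
      then have e: "2 * (cmod (g1 x) * cmod (g2 x)) \<le> (cmod (g1 x))\<^sup>2 + (cmod (g2 x))\<^sup>2"
        by (simp add: power2_eq_square algebra_simps)
      have "0 \<le> cmod (g1 x) * cmod (g2 x)" by simp
      moreover have "norm (cmod (g1 x) * cmod (g2 x)) = cmod (g1 x) * cmod (g2 x)" by simp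
      moreover have "norm ((cmod (g1 x))\<^sup>2 + (cmod (g2 x))\<^sup>2) = (cmod (g1 x))\<^sup>2 + (cmod (g2 x))\<^sup>2" by simp
      ultimately show "norm (cmod (g1 x) * cmod (g2 x)) \<le> norm ((cmod (g1 x))\<^sup>2 + (cmod (g2 x))\<^sup>2)"
        using e by linarith
    qed
  qed measurable
  have CS: "C \<le> sqrt N1 * sqrt N2"
  proof (rule real_cs_aux[OF _ N1 N2])
    fix l :: real assume l: "l > 0"
    have "C \<le> (\<integral>x. (l * (cmod (g1 x))\<^sup>2 + (cmod (g2 x))\<^sup>2 / l) / 2 \<partial>lborel)"
      unfolding C_def
    proof (rule integral_mono[OF i12])
      show "integrable lborel (\<lambda>x. (l * (cmod (g1 x))\<^sup>2 + (cmod (g2 x))\<^sup>2 / l) / 2)"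
        using i1 i2 by auto
      fix x
      have "0 \<le> (l * cmod (g1 x) - cmod (g2 x))\<^sup>2 / l" using l by simp
      then show "cmod (g1 x) * cmod (g2 x) \<le> (l * (cmod (g1 x))\<^sup>2 + (cmod (g2 x))\<^sup>2 / l) / 2"
        using l by (simp add: power2_eq_square field_simps)
    qed
    also have "\<dots> = (l * N1 + N2 / l) / 2"
      unfolding N1_def N2_def using i1 i2 by simp
    finally show "C \<le> (l * N1 + N2 / l) / 2" .
  qed
  have iq: "integrable lborel (\<lambda>x. a\<^sup>2 * (cmod (g1 x))\<^sup>2 + 2 * a * b * (cmod (g1 x) * cmod (g2 x)) + b\<^sup>2 * (cmod (g2 x))\<^sup>2)"
    using i1 i2 i12 by auto
  have "(\<integral>x. (cmod (h x))\<^sup>2 \<partial>lborel) \<le>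
      (\<integral>x. a\<^sup>2 * (cmod (g1 x))\<^sup>2 + 2 * a * b * (cmod (g1 x) * cmod (g2 x)) + b\<^sup>2 * (cmod (g2 x))\<^sup>2 \<partial>lborel)"
  proof (rule integral_mono_AE[OF ih iq])
    show "AE x in lborel. (cmod (h x))\<^sup>2 \<le> a\<^sup>2 * (cmod (g1 x))\<^sup>2 + 2 * a * b * (cmod (g1 x) * cmod (g2 x)) + b\<^sup>2 * (cmod (g2 x))\<^sup>2"
      using ae
    proof eventually_elim
      case (elim x)
      then have "(cmod (h x))\<^sup>2 \<le> (a * cmod (g1 x) + b * cmod (g2 x))\<^sup>2"
        by (simp add: power_mono)
      then show ?case by (simp add: power2_eq_square algebra_simps)
    qed
  qed
  also have "\<dots> = a\<^sup>2 * N1 + 2 * a * b * C + b\<^sup>2 * N2"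
    unfolding N1_def N2_def C_def using i1 i2 i12 by simp
  also have "\<dots> \<le> a\<^sup>2 * N1 + 2 * a * b * (sqrt N1 * sqrt N2) + b\<^sup>2 * N2"
    using CS a b by (simp add: mult_left_mono)
  also have "\<dots> = (a * sqrt N1 + b * sqrt N2)\<^sup>2"
    using N1 N2 by (simp add: power2_eq_square algebra_simps)
  finally have "sqrt (\<integral>x. (cmod (h x))\<^sup>2 \<partial>lborel) \<le> sqrt ((a * sqrt N1 + b * sqrt N2)\<^sup>2)"
    by (rule real_sqrt_le_mono)
  also have "\<dots> = a * sqrt N1 + b * sqrt N2" using a b N1 N2 by simp
  finally show ?thesis unfolding L2_norm_def N1_def N2_def by simp
qed

lemma exp_powr_le:
  fixes r z :: real
  assumes "0 \<le> r" "r \<le> 1" "z > 0"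
  shows "exp (r * ln z) \<le> 1 + z"
proof (cases "z \<le> 1")
  case True
  then have "ln z \<le> 0" using assms by simp
  then have "r * ln z \<le> 0" using assms by (simp add: mult_nonneg_nonpos)
  then show ?thesis using assms by (smt (verit) exp_le_one_iff)
next
  case False
  then have "ln z \<ge> 0" by simp
  then have "r * ln z \<le> ln z" using assms by (simp add: mult_left_le_one_le)
  then have "exp (r * ln z) \<le> exp (ln z)" by simp
  then show ?thesis using assms by simp
qed


lemma coef1:
  fixes T p t \<epsilon> s :: real
  assumes T: "T > 0" and p: "p > 1" and t: "0 \<le> t" "t \<le> T" and eps: "\<epsilon> > 0" and s: "s \<ge> 0"
  shows "exp (- (t * s)) * (\<epsilon> powr p * exp (p * T * s)) / (1 + \<epsilon> powr p * exp (p * T * s))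
         \<le> \<epsilon> powr (t / T)"
proof -
  define L where "L = ln \<epsilon>"
  define z where "z = \<epsilon> powr p * exp (p * T * s)"
  have z: "z = exp (p * L + p * T * s)" using eps
    by (simp add: z_def L_def powr_def exp_add)
  have zpos: "z > 0" using z by simp
  have lnz: "ln z = p * L + p * T * s" using z by simp
  have r0: "0 \<le> 1 - t / (p * T)" and r1: "1 - t / (p * T) \<le> 1"
  proof -
    have Tp: "T \<le> T * p" using mult_left_mono[of 1 p T] T p by simp
    have "t / (p * T) \<le> 1" using t T p Tp by (simp add: field_simps, linarith)
    moreover have "t / (p * T) \<ge> 0" using t T p by simp
    ultimately show "0 \<le> 1 - t / (p * T)" "1 - t / (p * T) \<le> 1" by auto
  qed
  have eq: "exp (- (t * s)) * z = exp (t / T * L) * exp ((1 - t / (p * T)) * ln z)"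
  proof -
    have "- (t * s) + (p * L + p * T * s) = t / T * L + (1 - t / (p * T)) * (p * L + p * T * s)"
      using T p by (simp add: field_simps)
    then show ?thesis unfolding lnz z by (simp add: exp_add[symmetric])
  qed
  also have "\<dots> \<le> exp (t / T * L) * (1 + z)"
    using exp_powr_le[OF r0 r1 zpos] by simp
  finally have "exp (- (t * s)) * z \<le> exp (t / T * L) * (1 + z)" .
  then have "exp (- (t * s)) * z / (1 + z) \<le> exp (t / T * L)"
    using zpos by (simp add: pos_divide_le_eq)
  moreover have "exp (t / T * L) = \<epsilon> powr (t / T)" using eps by (simp add: powr_def L_def)
  ultimately show ?thesis unfolding z_def by simp
qed

lemma coef2:
  fixes T p t \<epsilon> s :: real
  assumes T: "T > 0" and p: "p > 1" and t: "0 \<le> t" "t \<le> T" and eps: "\<epsilon> > 0" and s: "s \<ge> 0"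
  shows "exp ((T - t) * s) / (1 + \<epsilon> powr p * exp (p * T * s)) \<le> \<epsilon> powr (t / T - 1)"
proof -
  define L where "L = ln \<epsilon>"
  define z where "z = \<epsilon> powr p * exp (p * T * s)"
  have z: "z = exp (p * L + p * T * s)" using eps
    by (simp add: z_def L_def powr_def exp_add)
  have zpos: "z > 0" using z by simp
  have lnz: "ln z = p * L + p * T * s" using z by simp
  have r0: "0 \<le> (T - t) / (p * T)" and r1: "(T - t) / (p * T) \<le> 1"
  proof -
    have Tp: "T \<le> T * p" using mult_left_mono[of 1 p T] T p by simp
    have "(T - t) / (p * T) \<le> 1" using t T p Tp by (simp add: field_simps, linarith)
    moreover have "(T - t) / (p * T) \<ge> 0" using t T p by simp
    ultimately show "0 \<le> (T - t) / (p * T)" "(T - t) / (p * T) \<le> 1" by auto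
  qed
  have eq: "exp ((T - t) * s) = exp ((t / T - 1) * L) * exp ((T - t) / (p * T) * ln z)"
  proof -
    have "(T - t) * s = (t / T - 1) * L + (T - t) / (p * T) * (p * L + p * T * s)"
      using T p by (simp add: field_simps)
    then show ?thesis unfolding lnz by (simp add: exp_add[symmetric])
  qed
  also have "\<dots> \<le> exp ((t / T - 1) * L) * (1 + z)"
    using exp_powr_le[OF r0 r1 zpos] by simp
  finally have "exp ((T - t) * s) / (1 + z) \<le> exp ((t / T - 1) * L)"
    using zpos by (simp add: pos_divide_le_eq)
  moreover have "exp ((t / T - 1) * L) = \<epsilon> powr (t / T - 1)" using eps by (simp add: powr_def L_def)
  ultimately show ?thesis unfolding z_def by simp
qed


theorem theorem3:
  fixes F :: "(real \<Rightarrow> complex) \<Rightarrow> (real \<Rightarrow> complex)"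
    and T p E1 \<epsilon> \<beta> :: real
    and \<phi> \<phi>\<epsilon> :: "real \<Rightarrow> complex"
    and u v :: "real \<Rightarrow> real \<Rightarrow> complex"
  assumes F: "is_L2_fourier F"
    and T: "T > 0" and p: "p > 1" and E1: "E1 \<ge> 0"
    and eps: "0 < \<epsilon>" "\<epsilon> < 1"
    and phi: "\<phi> \<in> L2" "\<phi>\<epsilon> \<in> L2" "L2_norm (\<lambda>x. \<phi> x - \<phi>\<epsilon> x) \<le> \<epsilon>"
    and u_exact: "\<forall>t\<in>{0..T}. (\<lambda>x. u x t) \<in> L2 \<and>
        (AE \<xi> in lborel. F (\<lambda>x. u x t) \<xi> = complex_of_real (exp ((T - t) * \<xi>\<^sup>2)) * F \<phi> \<xi>)"
    and u0: "L2_norm (\<lambda>x. u x 0) \<le> E1"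
    and beta: "\<beta> = \<epsilon> powr p"
    and v_reg: "\<forall>t\<in>{0..T}. (\<lambda>x. v x t) \<in> L2 \<and>
        (AE \<xi> in lborel. F (\<lambda>x. v x t) \<xi> =
           complex_of_real (exp ((T - t) * \<xi>\<^sup>2) / (1 + \<beta> * exp (p * T * \<xi>\<^sup>2))) * F \<phi>\<epsilon> \<xi>)"
  shows "\<forall>t\<in>{0..T}. L2_norm (\<lambda>x. u x t - v x t) \<le> \<epsilon> powr (t / T) * (E1 + 1)"
proof
  fix t assume t: "t \<in> {0..T}"
  have t0: "0 \<le> t" and tT: "t \<le> T" using t by auto
  have Fpres: "\<And>f. f \<in> L2 \<Longrightarrow> F f \<in> L2 \<and> L2_norm (F f) = L2_norm f"
    and Flin: "\<And>f g c. f \<in> L2 \<Longrightarrow> g \<in> L2 \<Longrightarrow>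
        AE \<xi> in lborel. F (\<lambda>x. c * f x + g x) \<xi> = c * F f \<xi> + F g \<xi>"
    using F unfolding is_L2_fourier_def by blast+
  have ut: "(\<lambda>x. u x t) \<in> L2" and aeu: "AE \<xi> in lborel. F (\<lambda>x. u x t) \<xi> = complex_of_real (exp ((T - t) * \<xi>\<^sup>2)) * F \<phi> \<xi>"
    using u_exact t by auto
  have vt: "(\<lambda>x. v x t) \<in> L2" and aev: "AE \<xi> in lborel. F (\<lambda>x. v x t) \<xi> =
           complex_of_real (exp ((T - t) * \<xi>\<^sup>2) / (1 + \<beta> * exp (p * T * \<xi>\<^sup>2))) * F \<phi>\<epsilon> \<xi>"
    using v_reg t by auto
  have z0: "0 \<in> {0..T}" using T by simp
  have u0L: "(\<lambda>x. u x 0) \<in> L2" and aeu0: "AE \<xi> in lborel. F (\<lambda>x. u x 0) \<xi> = complex_of_real (exp (T * \<xi>\<^sup>2)) * F \<phi> \<xi>"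
    using bspec[OF u_exact z0] by simp_all
  have wL: "(\<lambda>x. u x t - v x t) \<in> L2" using L2_diff[OF ut vt] .
  have dL: "(\<lambda>x. \<phi> x - \<phi>\<epsilon> x) \<in> L2" using L2_diff[OF phi(1,2)] .
  have e1: "(\<lambda>x. (-1) * v x t + u x t) = (\<lambda>x. u x t - v x t)" by auto
  have aew: "AE \<xi> in lborel. F (\<lambda>x. u x t - v x t) \<xi> = (-1) * F (\<lambda>x. v x t) \<xi> + F (\<lambda>x. u x t) \<xi>"
    using Flin[OF vt ut, of "-1"] unfolding e1 .
  have e2: "(\<lambda>x. (-1) * \<phi>\<epsilon> x + \<phi> x) = (\<lambda>x. \<phi> x - \<phi>\<epsilon> x)" by auto
  have aed: "AE \<xi> in lborel. F (\<lambda>x. \<phi> x - \<phi>\<epsilon> x) \<xi> = (-1) * F \<phi>\<epsilon> \<xi> + F \<phi> \<xi>"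
    using Flin[OF phi(2,1), of "-1"] unfolding e2 .
  define a where "a = \<epsilon> powr (t / T)"
  define b where "b = \<epsilon> powr (t / T - 1)"
  have a0: "a \<ge> 0" and b0: "b \<ge> 0" unfolding a_def b_def by auto
  have bnd: "AE \<xi> in lborel. cmod (F (\<lambda>x. u x t - v x t) \<xi>)
      \<le> a * cmod (F (\<lambda>x. u x 0) \<xi>) + b * cmod (F (\<lambda>x. \<phi> x - \<phi>\<epsilon> x) \<xi>)"
    using aew aeu aev aeu0 aed
  proof eventually_elim
    case (elim \<xi>)
    define s where "s = \<xi>\<^sup>2"
    have s: "s \<ge> 0" unfolding s_def by simp
    define E where "E = exp (p * T * s)"
    have bpos: "\<beta> > 0" using beta eps by simp
    have den: "1 + \<beta> * E > 0" using bpos by (simp add: E_def add_pos_pos)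
    define c1 where "c1 = exp (- (t * s)) * (\<beta> * E) / (1 + \<beta> * E)"
    define K where "K = exp ((T - t) * s) / (1 + \<beta> * E)"
    have c1le: "c1 \<le> a" unfolding c1_def a_def E_def beta
      using coef1[OF T p t0 tT eps(1) s] .
    have Kle: "K \<le> b" unfolding K_def b_def E_def beta
      using coef2[OF T p t0 tT eps(1) s] .
    have c10: "c1 \<ge> 0" unfolding c1_def using den bpos by (simp add: E_def)
    have K0: "K \<ge> 0" unfolding K_def using den by simp
    have ex: "exp (- (t * s)) * exp (T * s) = exp ((T - t) * s)"
      by (simp add: exp_add[symmetric] algebra_simps)
    have rid: "exp ((T - t) * s) = c1 * exp (T * s) + K"
    proof -
      have "c1 * exp (T * s) + K = exp ((T - t) * s) * (\<beta> * E) / (1 + \<beta> * E) + exp ((T - t) * s) / (1 + \<beta> * E)"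
        unfolding c1_def K_def using ex by (simp add: field_simps)
      also have "\<dots> = exp ((T - t) * s) * ((\<beta> * E) + 1) / (1 + \<beta> * E)"
        by (simp add: add_divide_distrib distrib_left)
      also have "\<dots> = exp ((T - t) * s)" using den by (simp add: add.commute)
      finally show ?thesis by simp
    qed
    have cid: "complex_of_real (exp ((T - t) * s)) = complex_of_real c1 * complex_of_real (exp (T * s)) + complex_of_real K"
      using rid by simp
    have "F (\<lambda>x. u x t - v x t) \<xi> = complex_of_real c1 * F (\<lambda>x. u x 0) \<xi> + complex_of_real K * F (\<lambda>x. \<phi> x - \<phi>\<epsilon> x) \<xi>"
    proof -
      have hw': "F (\<lambda>x. u x t - v x t) \<xi> = - (complex_of_real K * F \<phi>\<epsilon> \<xi>) + complex_of_real (exp ((T - t) * s)) * F \<phi> \<xi>"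
        using elim(1,2,3) by (simp add: K_def E_def s_def)
      have h0: "F (\<lambda>x. u x 0) \<xi> = complex_of_real (exp (T * s)) * F \<phi> \<xi>"
        using elim(4) by (simp add: s_def)
      show ?thesis unfolding hw' h0 elim(5) cid by (simp add: algebra_simps)
    qed
    then have "cmod (F (\<lambda>x. u x t - v x t) \<xi>) \<le> c1 * cmod (F (\<lambda>x. u x 0) \<xi>) + K * cmod (F (\<lambda>x. \<phi> x - \<phi>\<epsilon> x) \<xi>)"
      using c10 K0 by (simp add: norm_mult) (metis (no_types) norm_triangle_ineq norm_mult norm_of_real abs_of_nonneg)
    also have "\<dots> \<le> a * cmod (F (\<lambda>x. u x 0) \<xi>) + b * cmod (F (\<lambda>x. \<phi> x - \<phi>\<epsilon> x) \<xi>)"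
      using c1le Kle by (intro add_mono mult_right_mono) auto
    finally show ?case .
  qed
  have "L2_norm (\<lambda>x. u x t - v x t) = L2_norm (F (\<lambda>x. u x t - v x t))"
    using Fpres[OF wL] by simp
  also have "\<dots> \<le> a * L2_norm (F (\<lambda>x. u x 0)) + b * L2_norm (F (\<lambda>x. \<phi> x - \<phi>\<epsilon> x))"
    using L2_bound[OF _ _ _ a0 b0 bnd] Fpres[OF wL] Fpres[OF u0L] Fpres[OF dL] by blast
  also have "\<dots> = a * L2_norm (\<lambda>x. u x 0) + b * L2_norm (\<lambda>x. \<phi> x - \<phi>\<epsilon> x)"
    using Fpres[OF u0L] Fpres[OF dL] by simp
  also have "\<dots> \<le> a * E1 + b * \<epsilon>"
    using u0 phi(3) a0 b0 by (intro add_mono mult_left_mono) auto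
  also have "b * \<epsilon> = a"
  proof -
    have "\<epsilon> powr (t / T - 1) * \<epsilon> powr 1 = \<epsilon> powr (t / T - 1 + 1)" by (rule powr_add[symmetric])
    then show ?thesis unfolding a_def b_def using eps by simp
  qed
  finally show "L2_norm (\<lambda>x. u x t - v x t) \<le> \<epsilon> powr (t / T) * (E1 + 1)"
    unfolding a_def by (simp add: algebra_simps)
qed

end
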